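(* Let $f\geq 1$, $\mathbf{K}=\mathbf{Q}(\zeta_f)$, $n=\varphi(f)$, and let $A$ be a $d\times d$ unitriangular matrix (upper triangular with ones on the diagonal) with coefficients in $\mathbf{K}$ such that every coefficient, written in the power basis $1,\zeta_f,\dots,\zeta_f^{n-1}$, has all its rational coordinates bounded by $1$ in absolute value. Then $\|A\|\leq dn^{3/2}$ and $\|A^{-1}\|=(2n)^{O(d)}$.
   Context: $\mathbf{K}^d$ carries the Hermitian form $\langle x,y\rangle=\sum_t\mathrm{tr}_{\mathbf{K}/\mathbf{Q}}(x_t\overline{y_t})$ and $\|\cdot\|$ is the induced operator norm on matrices. *)

theory Defs
  imports Complex_Main "HOL-Number_Theory.Number_Theory"
begin

text \<open>The cyclotomic field K = Q(zeta_f) is realised inside the complex numbers,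
  with zeta_f = exp(2 pi i / f).  Its degree is n = totient f.\<close>

definition zeta :: "nat \<Rightarrow> complex" where
  "zeta f = cis (2 * pi / real f)"

definition powbasis_comb :: "nat \<Rightarrow> (nat \<Rightarrow> rat) \<Rightarrow> complex" where
  "powbasis_comb f c = (\<Sum>j<totient f. of_rat (c j) * zeta f ^ j)"

definition Kf :: "nat \<Rightarrow> complex set" where
  "Kf f = {z. \<exists>c. z = powbasis_comb f c}"

definition coords :: "nat \<Rightarrow> complex \<Rightarrow> nat \<Rightarrow> rat" where
  "coords f z = (THE c. (\<forall>j. totient f \<le> j \<longrightarrow> c j = 0) \<and> z = powbasis_comb f c)"

text \<open>The Galois automorphism sigma_k : zeta \<mapsto> zeta^k (k coprime to f).\<close>
definition sigma :: "nat \<Rightarrow> nat \<Rightarrow> complex \<Rightarrow> complex" where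
  "sigma f k z = (\<Sum>j<totient f. of_rat (coords f z j) * zeta f ^ (j * k))"

definition trK :: "nat \<Rightarrow> complex \<Rightarrow> complex" where
  "trK f z = (\<Sum>k\<in>{k\<in>{1..f}. coprime k f}. sigma f k z)"

text \<open>Vectors in K^d are modelled as functions nat => complex, coordinates t < d.\<close>
definition herm :: "nat \<Rightarrow> nat \<Rightarrow> (nat \<Rightarrow> complex) \<Rightarrow> (nat \<Rightarrow> complex) \<Rightarrow> complex" where
  "herm f d x y = (\<Sum>t<d. trK f (x t * cnj (y t)))"

definition vnorm :: "nat \<Rightarrow> nat \<Rightarrow> (nat \<Rightarrow> complex) \<Rightarrow> real" where
  "vnorm f d x = sqrt (Re (herm f d x x))"

definition mulv :: "nat \<Rightarrow> (nat \<Rightarrow> nat \<Rightarrow> complex) \<Rightarrow> (nat \<Rightarrow> complex) \<Rightarrow> nat \<Rightarrow> complex" where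
  "mulv d A x = (\<lambda>i. \<Sum>j<d. A i j * x j)"

definition matmul :: "nat \<Rightarrow> (nat \<Rightarrow> nat \<Rightarrow> complex) \<Rightarrow> (nat \<Rightarrow> nat \<Rightarrow> complex) \<Rightarrow> nat \<Rightarrow> nat \<Rightarrow> complex" where
  "matmul d A B = (\<lambda>i k. \<Sum>j<d. A i j * B j k)"

definition opnorm :: "nat \<Rightarrow> nat \<Rightarrow> (nat \<Rightarrow> nat \<Rightarrow> complex) \<Rightarrow> real" where
  "opnorm f d A = Sup {vnorm f d (mulv d A x) / vnorm f d x | x.
      (\<forall>t<d. x t \<in> Kf f) \<and> (\<exists>t<d. x t \<noteq> 0)}"

end

theory Submission imports Defs "Berlekamp_Zassenhaus.Factor_Bound" begin

lemma zeta_pow: "zeta f ^ k = cis (2 * pi * real k / real f)"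
  unfolding zeta_def DeMoivre by (simp add: field_simps)

lemma zeta_pow_eq_1: assumes f: "f > 0" shows "zeta f ^ k = 1 \<longleftrightarrow> f dvd k"
proof
  assume "zeta f ^ k = 1"
  then have "Re (zeta f ^ k) = 1" by simp
  then have "cos (2*pi*real k/real f) = 1" by (simp add: zeta_pow)
  then obtain m::int where m: "2*pi*real k/real f = real_of_int m*2*pi" using cos_one_2pi_int by auto
  then have "real k = real_of_int m * real f" using f by (simp add: field_simps)
  then have "int k = m * int f" by (metis of_int_eq_iff of_int_mult of_int_of_nat_eq)
  then have "int f dvd int k" by simp
  then show "f dvd k" by simp
next
  assume "f dvd k"
  then obtain m where "k = f * m" by auto
  then have "2 * pi * real k / real f = 2 * pi * real m" using f by (simp add: field_simps)
  then show "zeta f ^ k = 1" by (simp add: zeta_pow cis_multiple_2pi)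
qed

lemma zeta_nz: "zeta f \<noteq> 0"
  by (simp add: zeta_def cis_neq_zero)

lemma norm_zeta_pow: "norm (zeta f ^ k) = 1"
  by (simp add: zeta_pow norm_cis)

lemma zeta_pow_mod: assumes f: "f > 0" shows "zeta f ^ k = zeta f ^ (k mod f)"
proof -
  have "zeta f ^ k = zeta f ^ (f * (k div f) + k mod f)" by simp
  also have "\<dots> = (zeta f ^ f) ^ (k div f) * zeta f ^ (k mod f)" by (simp only: power_add power_mult)
  also have "zeta f ^ f = 1" using zeta_pow_eq_1[OF f] by simp
  finally show ?thesis by simp
qed

lemma zeta_pow_inj: assumes f: "f > 0" and eq: "zeta f ^ a = zeta f ^ b" shows "a mod f = b mod f"
proof -
  have *: "a' = b'" if "a' < f" "b' < f" "a' \<le> b'" "zeta f ^ a' = zeta f ^ b'" for a' b'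
  proof -
    have "zeta f ^ b' = zeta f ^ (a' + (b' - a'))" using that(3) by simp
    also have "\<dots> = zeta f ^ a' * zeta f ^ (b' - a')" by (rule power_add)
    finally have "zeta f ^ b' = zeta f ^ a' * zeta f ^ (b' - a')" .
    with that(4) have "zeta f ^ (b' - a') = 1" using zeta_nz[of f] by simp
    then have "f dvd (b' - a')" using zeta_pow_eq_1[OF f] by simp
    moreover have "b' - a' < f" using that by linarith
    ultimately have "b' - a' = 0" by (metis nat_dvd_not_less neq0_conv)
    then show ?thesis using that by linarith
  qed
  have eq': "zeta f ^ (a mod f) = zeta f ^ (b mod f)" using eq zeta_pow_mod[OF f] by metis
  show ?thesis
  proof (cases "a mod f \<le> b mod f")
    case True then show ?thesis using * eq' f by simp
  next
    case False then show ?thesis using *[of "b mod f" "a mod f"] eq' f by simp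
  qed
qed

lemma cnj_zeta_pow: assumes f: "f > 0" shows "cnj (zeta f ^ k) = (zeta f ^ k) ^ (f - 1)"
proof -
  let ?w = "zeta f ^ k"
  have n1: "norm ?w = 1" by (rule norm_zeta_pow)
  have "complex_of_real ((norm ?w)^2) = ?w * cnj ?w" by (rule complex_norm_square)
  then have c1: "?w * cnj ?w = 1" unfolding n1 by simp
  have sf: "Suc (f - 1) = f" using f by simp
  have "?w * ?w ^ (f - 1) = ?w ^ Suc (f - 1)" by simp
  also have "\<dots> = ?w ^ f" unfolding sf ..
  also have "\<dots> = (zeta f ^ f) ^ k" by (metis power_mult mult.commute)
  also have "\<dots> = 1" using zeta_pow_eq_1[OF f, of f] by simp
  finally have c2: "?w * ?w ^ (f - 1) = 1" .
  from inverse_unique[OF c1] inverse_unique[OF c2] show ?thesis by simp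
qed


interpretation of_rat_poly_hom: map_poly_inj_idom_hom "of_rat :: rat \<Rightarrow> complex" ..

abbreviation cq :: "rat poly \<Rightarrow> complex poly" where "cq \<equiv> map_poly of_rat"
abbreviation ci :: "int poly \<Rightarrow> complex poly" where "ci \<equiv> map_poly of_int"
abbreviation ri :: "int poly \<Rightarrow> rat poly" where "ri \<equiv> map_poly of_int"

lemma cq_ri: "cq (ri g) = ci g"
  by (rule poly_eqI) (simp add: coeff_map_poly)

definition xf :: "nat \<Rightarrow> int poly" where "xf f = monom 1 f - 1"

lemma ci_xf: "ci (xf f) = monom 1 f - 1"
  by (simp add: xf_def of_int_poly_hom.hom_minus)

lemma poly_ci_xf: "poly (ci (xf f)) z = z ^ f - 1"
  by (simp add: ci_xf poly_monom)

lemma xf_monic: assumes f: "f > 0" shows "monic (xf f)" "degree (xf f) = f"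
proof -
  have c: "coeff (xf f) f = 1" using f by (simp add: xf_def)
  have "degree (monom (1::int) f - 1) \<le> max (degree (monom (1::int) f)) (degree (1::int poly))"
    by (rule degree_diff_le_max)
  then have "degree (xf f) \<le> f" unfolding xf_def by (simp add: degree_monom_eq)
  moreover have "f \<le> degree (xf f)" using c by (intro le_degree) simp
  ultimately show d: "degree (xf f) = f" by simp
  show "monic (xf f)" using c d by simp
qed

definition minp :: "nat \<Rightarrow> rat poly" where
  "minp f = (SOME P. monic P \<and> poly (cq P) (zeta f) = 0 \<and> (\<forall>R. poly (cq R) (zeta f) = 0 \<longrightarrow> P dvd R))"

lemma minp_ex: assumes f: "f > 0"
  shows "\<exists>P. monic P \<and> poly (cq P) (zeta f) = 0 \<and> (\<forall>R. poly (cq R) (zeta f) = 0 \<longrightarrow> P dvd R)"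
proof -
  define Q where "Q = (\<lambda>R. R \<noteq> 0 \<and> poly (cq R) (zeta f) = 0)"
  have "Q (ri (xf f))"
    unfolding Q_def
  proof
    have "lead_coeff (ri (xf f)) = 1" using xf_monic[OF f] by (simp add: of_int_hom.hom_lead_coeff)
    then show "ri (xf f) \<noteq> 0" by auto
    show "poly (cq (ri (xf f))) (zeta f) = 0" unfolding cq_ri poly_ci_xf using zeta_pow_eq_1[OF f, of f] by simp
  qed
  from ex_has_least_nat[of Q _ degree, OF this] obtain R0 where R0: "Q R0"
    and min: "\<And>R. Q R \<Longrightarrow> degree R0 \<le> degree R" by blast
  define P where "P = smult (inverse (lead_coeff R0)) R0"
  have lc0: "lead_coeff R0 \<noteq> 0" using R0 unfolding Q_def by simp
  have mon: "monic P" unfolding P_def using lc0 by (simp add: lead_coeff_smult)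
  have degP: "degree P = degree R0" unfolding P_def using lc0 by simp
  have P0: "poly (cq P) (zeta f) = 0" unfolding P_def using R0 unfolding Q_def
    by (simp add: of_rat_hom.map_poly_hom_smult)
  have "P dvd R" if R: "poly (cq R) (zeta f) = 0" for R
  proof (rule ccontr)
    assume nd: "\<not> P dvd R"
    define r where "r = R mod P"
    have r0: "r \<noteq> 0" using nd unfolding r_def by (simp add: mod_eq_0_iff_dvd)
    have Pn0: "P \<noteq> 0" using mon by auto
    have dr: "degree r < degree P" using degree_mod_less[OF Pn0, of R] r0 unfolding r_def by auto
    have "R = R div P * P + r" unfolding r_def by simp
    then have "cq R = cq (R div P) * cq P + cq r"
      by (metis of_rat_poly_hom.hom_add of_rat_poly_hom.hom_mult)
    then have "poly (cq r) (zeta f) = 0" using R P0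
      by (metis add_0 mult_zero_right poly_add poly_mult)
    then have "Q r" using r0 unfolding Q_def by simp
    from min[OF this] dr degP show False by simp
  qed
  with mon P0 show ?thesis by blast
qed

lemma minp: assumes f: "f > 0"
  shows "monic (minp f)" "poly (cq (minp f)) (zeta f) = 0"
    "\<And>R. poly (cq R) (zeta f) = 0 \<Longrightarrow> minp f dvd R"
proof -
  have "monic (minp f) \<and> poly (cq (minp f)) (zeta f) = 0 \<and> (\<forall>R. poly (cq R) (zeta f) = 0 \<longrightarrow> minp f dvd R)"
    unfolding minp_def by (rule someI_ex, rule minp_ex[OF f])
  then show "monic (minp f)" "poly (cq (minp f)) (zeta f) = 0"
    "\<And>R. poly (cq R) (zeta f) = 0 \<Longrightarrow> minp f dvd R" by auto
qed

lemma minp_int_ex: assumes f: "f > 0" shows "\<exists>g. minp f = ri g"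
proof -
  have "minp f dvd ri (xf f)"
    by (rule minp(3)[OF f], unfold cq_ri poly_ci_xf, use zeta_pow_eq_1[OF f, of f] in simp)
  then obtain H where XH: "ri (xf f) = minp f * H" by (auto elim: dvdE)
  obtain r rg where rn: "rat_to_normalized_int_poly (minp f) = (r, rg)" by force
  from rat_to_int_factor_explicit[OF XH rn] obtain r' where X: "xf f = rg * smult (content (xf f)) r'" by auto
  from rat_to_normalized_int_poly[OF rn] have P: "minp f = smult r (ri rg)" and r: "r > 0" by auto
  have "lead_coeff (xf f) = lead_coeff rg * (content (xf f) * lead_coeff r')"
    using arg_cong[OF X, of lead_coeff] unfolding lead_coeff_mult lead_coeff_smult .
  hence "lead_coeff rg * (content (xf f) * lead_coeff r') = 1"
    using xf_monic[OF f] by simp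
  hence u: "lead_coeff rg = 1 \<or> lead_coeff rg = -1" unfolding zmult_eq_1_iff by blast
  have "1 = lead_coeff (minp f)" using minp(1)[OF f] by simp
  also have "\<dots> = r * of_int (lead_coeff rg)" using P by (simp add: lead_coeff_smult of_int_hom.hom_lead_coeff)
  finally have e: "1 = r * of_int (lead_coeff rg)" .
  have "lead_coeff rg = 1"
  proof (rule ccontr)
    assume "lead_coeff rg \<noteq> 1"
    with u have "lead_coeff rg = -1" by simp
    with e r show False by simp
  qed
  with e have "r = 1" by simp
  with P show ?thesis by auto
qed

definition ip :: "nat \<Rightarrow> int poly" where "ip f = (SOME g. minp f = ri g)"

lemma ri_ip: "f > 0 \<Longrightarrow> ri (ip f) = minp f"
  unfolding ip_def by (rule someI_ex[OF minp_int_ex, symmetric])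

lemma ip_monic: assumes f: "f > 0" shows "monic (ip f)"
proof -
  have "of_int (lead_coeff (ip f)) = (1::rat)"
    using minp(1)[OF f] ri_ip[OF f] by (metis of_int_hom.hom_lead_coeff)
  then show ?thesis by simp
qed

lemma int_dvd_of_rat_dvd: assumes m: "monic (g::int poly)" and d: "ri g dvd ri h" shows "g dvd h"
proof -
  obtain q s where pd: "pseudo_divmod h g = (q, s)" by force
  have g0: "g \<noteq> 0" using m by auto
  from pseudo_divmod(1)[OF g0 pd] m have eq: "h = g * q + s" by simp
  from pseudo_divmod(2)[OF g0 pd] have ds: "s = 0 \<or> degree s < degree g" .
  have "ri s = ri h - ri g * ri q" using eq by (simp add: of_int_poly_hom.hom_add of_int_poly_hom.hom_mult)
  then have dv: "ri g dvd ri s" using d by simp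
  have "s = 0"
  proof (rule ccontr)
    assume s0: "s \<noteq> 0"
    then have "ri s \<noteq> 0" by simp
    from dvd_imp_degree_le[OF dv this] have "degree g \<le> degree s" by (simp add: of_int_hom.degree_map_poly_hom)
    with ds s0 show False by simp
  qed
  with eq show ?thesis by simp
qed

lemma ip_root: "f > 0 \<Longrightarrow> poly (ci (ip f)) (zeta f) = 0"
  using minp(2) ri_ip cq_ri by metis

lemma ip_dvd: assumes f: "f > 0" and z: "poly (ci g) (zeta f) = 0" shows "ip f dvd g"
proof -
  have "minp f dvd ri g" by (rule minp(3)[OF f], unfold cq_ri, rule z)
  then show ?thesis using int_dvd_of_rat_dvd[OF ip_monic[OF f]] ri_ip[OF f] by simp
qed


definition ZZ :: "nat \<Rightarrow> complex set" where "ZZ f = {poly (ci g) (zeta f) | g. True}"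

lemma ZZ_I: "poly (ci g) (zeta f) \<in> ZZ f" unfolding ZZ_def by blast
lemma ZZ_E: assumes "z \<in> ZZ f" obtains g where "z = poly (ci g) (zeta f)" using assms unfolding ZZ_def by blast

lemma ZZ_add: assumes "a \<in> ZZ f" "b \<in> ZZ f" shows "a + b \<in> ZZ f"
proof -
  obtain g h where "a = poly (ci g) (zeta f)" "b = poly (ci h) (zeta f)" using assms by (metis ZZ_E)
  then have "a + b = poly (ci (g + h)) (zeta f)" by (simp add: of_int_poly_hom.hom_add)
  then show ?thesis by (simp add: ZZ_I)
qed

lemma ZZ_mult: assumes "a \<in> ZZ f" "b \<in> ZZ f" shows "a * b \<in> ZZ f"
proof -
  obtain g h where "a = poly (ci g) (zeta f)" "b = poly (ci h) (zeta f)" using assms by (metis ZZ_E)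
  then have "a * b = poly (ci (g * h)) (zeta f)" by (simp add: of_int_poly_hom.hom_mult)
  then show ?thesis by (simp add: ZZ_I)
qed

lemma ZZ_of_int: "of_int c \<in> ZZ f"
proof -
  have "of_int c = poly (ci [:c:]) (zeta f)" by (simp add: of_int_hom.map_poly_pCons_hom)
  then show ?thesis by (simp add: ZZ_I)
qed

lemma ZZ_0: "0 \<in> ZZ f" using ZZ_of_int[of 0] by simp
lemma ZZ_1: "1 \<in> ZZ f" using ZZ_of_int[of 1] by simp

lemma ZZ_of_nat: "of_nat c \<in> ZZ f" using ZZ_of_int[of "int c"] by simp

lemma ZZ_zeta: "zeta f \<in> ZZ f"
proof -
  have "zeta f = poly (ci [:0,1:]) (zeta f)" by (simp add: of_int_hom.map_poly_pCons_hom)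
  then show ?thesis by (metis ZZ_I)
qed

lemma ZZ_power: "a \<in> ZZ f \<Longrightarrow> a ^ k \<in> ZZ f"
  by (induction k) (auto intro: ZZ_mult ZZ_1)

lemma ZZ_sum: "finite A \<Longrightarrow> (\<And>x. x \<in> A \<Longrightarrow> h x \<in> ZZ f) \<Longrightarrow> sum h A \<in> ZZ f"
  by (induction A rule: finite_induct) (auto intro: ZZ_add ZZ_0)

lemma ZZ_poly: assumes z: "z \<in> ZZ f" shows "poly (ci g) z \<in> ZZ f"
proof (induction g)
  case 0 then show ?case by (simp add: ZZ_0)
next
  case (pCons a g)
  have "poly (ci (pCons a g)) z = of_int a + z * poly (ci g) z" by (simp add: of_int_hom.map_poly_pCons_hom)
  then show ?case using pCons z by (metis ZZ_add ZZ_mult ZZ_of_int)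
qed

definition cgr :: "nat \<Rightarrow> nat \<Rightarrow> complex \<Rightarrow> complex \<Rightarrow> bool" where
  "cgr f p u v \<longleftrightarrow> (\<exists>w\<in>ZZ f. u - v = of_nat p * w)"

lemma cgr_refl: "cgr f p u u" unfolding cgr_def using ZZ_0 by force

lemma cgr_trans: assumes "cgr f p u v" "cgr f p v x" shows "cgr f p u x"
proof -
  obtain w1 w2 where "w1 \<in> ZZ f" "w2 \<in> ZZ f" "u - v = of_nat p * w1" "v - x = of_nat p * w2"
    using assms unfolding cgr_def by blast
  then have "u - x = of_nat p * (w1 + w2)" "w1 + w2 \<in> ZZ f" by (auto simp: algebra_simps intro: ZZ_add)
  then show ?thesis unfolding cgr_def by blast
qed

lemma cgr_add: assumes "cgr f p u v" "cgr f p u' v'" shows "cgr f p (u + u') (v + v')"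
proof -
  obtain w1 w2 where "w1 \<in> ZZ f" "w2 \<in> ZZ f" "u - v = of_nat p * w1" "u' - v' = of_nat p * w2"
    using assms unfolding cgr_def by blast
  then have "(u + u') - (v + v') = of_nat p * (w1 + w2)" "w1 + w2 \<in> ZZ f" by (auto simp: algebra_simps intro: ZZ_add)
  then show ?thesis unfolding cgr_def by blast
qed

lemma cgr_mult: assumes "cgr f p u v" "cgr f p u' v'" "u \<in> ZZ f" "v' \<in> ZZ f" shows "cgr f p (u * u') (v * v')"
proof -
  obtain w1 w2 where w: "w1 \<in> ZZ f" "w2 \<in> ZZ f" "u - v = of_nat p * w1" "u' - v' = of_nat p * w2"
    using assms unfolding cgr_def by blast
  have "u * u' - v * v' = u * (u' - v') + (u - v) * v'" by (simp add: algebra_simps)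
  also have "\<dots> = of_nat p * (u * w2 + w1 * v')" using w by (simp add: algebra_simps)
  finally have "u * u' - v * v' = of_nat p * (u * w2 + w1 * v')" .
  moreover have "u * w2 + w1 * v' \<in> ZZ f" using w assms by (intro ZZ_add ZZ_mult)
  ultimately show ?thesis unfolding cgr_def by blast
qed

lemma cgr_int: assumes "int p dvd (a - b)" shows "cgr f p (of_int a) (of_int b)"
proof -
  obtain c where "a - b = int p * c" using assms by (auto elim: dvdE)
  then have "(of_int a :: complex) - of_int b = of_nat p * of_int c" by (metis of_int_diff of_int_mult of_int_of_nat_eq)
  then show ?thesis unfolding cgr_def using ZZ_of_int by blast
qed

lemma binom_prime: fixes a b :: "'a::comm_ring_1" assumes p: "prime p"
  shows "(a + b) ^ p = a ^ p + b ^ p + of_nat p * (\<Sum>k\<in>{1..<p}. of_nat ((p choose k) div p) * a ^ k * b ^ (p - k))"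
proof -
  have p1: "p > 1" using p prime_gt_1_nat by blast
  have A: "{..p} = insert 0 (insert p {1..<p})" using p1 by auto
  have t: "of_nat (p choose k) * a ^ k * b ^ (p - k) = of_nat p * (of_nat ((p choose k) div p) * a ^ k * b ^ (p - k))"
    if "k \<in> {1..<p}" for k
  proof -
    have "p dvd (p choose k)" using that p by (intro dvd_choose_prime) auto
    then have "p choose k = p * ((p choose k) div p)" by simp
    then have "(of_nat (p choose k) :: 'a) = of_nat p * of_nat ((p choose k) div p)" by (metis of_nat_mult)
    then show ?thesis by (simp add: mult.assoc)
  qed
  have "(a + b) ^ p = (\<Sum>k\<le>p. of_nat (p choose k) * a ^ k * b ^ (p - k))" by (rule binomial_ring)
  also have "\<dots> = b ^ p + (a ^ p + (\<Sum>k\<in>{1..<p}. of_nat (p choose k) * a ^ k * b ^ (p - k)))"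
    unfolding A using p1 by (simp add: sum.insert)
  also have "(\<Sum>k\<in>{1..<p}. of_nat (p choose k) * a ^ k * b ^ (p - k))
      = (\<Sum>k\<in>{1..<p}. of_nat p * (of_nat ((p choose k) div p) * a ^ k * b ^ (p - k)))"
    using t by (rule sum.cong[OF refl])
  also have "\<dots> = of_nat p * (\<Sum>k\<in>{1..<p}. of_nat ((p choose k) div p) * a ^ k * b ^ (p - k))"
    by (simp add: sum_distrib_left)
  finally show ?thesis by (simp add: algebra_simps)
qed

lemma frob: assumes p: "prime p" and u: "u \<in> ZZ f" and v: "v \<in> ZZ f"
  shows "cgr f p ((u + v) ^ p) (u ^ p + v ^ p)"
proof -
  define w where "w = (\<Sum>k\<in>{1..<p}. of_nat ((p choose k) div p) * u ^ k * v ^ (p - k))"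
  have "w \<in> ZZ f" unfolding w_def using u v by (intro ZZ_sum ZZ_mult ZZ_power ZZ_of_nat) auto
  moreover have "(u + v) ^ p - (u ^ p + v ^ p) = of_nat p * w" unfolding w_def binom_prime[OF p] by simp
  ultimately show ?thesis unfolding cgr_def by blast
qed

lemma fermat_nat_int: assumes p: "prime p" shows "int p dvd (int c ^ p - int c)"
proof (induction c)
  case 0 have "p \<noteq> 0" using p by auto
  then show ?case by (simp add: zero_power)
next
  case (Suc c)
  define S where "S = (\<Sum>k\<in>{1..<p}. of_nat ((p choose k) div p) * int c ^ k * 1 ^ (p - k))"
  have e: "(int c + 1) ^ p = int c ^ p + 1 ^ p + int p * S" unfolding S_def by (rule binom_prime[OF p])
  have "int (Suc c) = int c + 1" by simp
  then have "int (Suc c) ^ p - int (Suc c) = (int c + 1) ^ p - (int c + 1)" by (simp only:)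
  also have "\<dots> = (int c ^ p - int c) + int p * S" unfolding e by simp
  finally have eq: "int (Suc c) ^ p - int (Suc c) = (int c ^ p - int c) + int p * S" .
  show ?case unfolding eq by (rule dvd_add[OF Suc dvd_triv_left])
qed

lemma fermat_int: assumes p: "prime p" shows "int p dvd (c ^ p - c)"
proof -
  have p0: "int p > 0" using p by (simp add: prime_gt_0_nat)
  define c' where "c' = c mod int p"
  have c'0: "c' \<ge> 0" unfolding c'_def using p0 by simp
  have "[c' ^ p = c'] (mod int p)"
    using fermat_nat_int[OF p, of "nat c'"] c'0 by (simp add: cong_iff_dvd_diff)
  moreover have "[c = c'] (mod int p)" unfolding c'_def by (simp add: cong_def)
  ultimately have "[c ^ p = c] (mod int p)" by (meson cong_pow cong_sym cong_trans)
  then show ?thesis by (simp add: cong_iff_dvd_diff)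
qed

lemma poly_frob: assumes p: "prime p" and z: "z \<in> ZZ f"
  shows "cgr f p ((poly (ci g) z) ^ p) (poly (ci g) (z ^ p))"
proof (induction g)
  case 0 have "p \<noteq> 0" using p by auto
  then show ?case by (simp add: zero_power cgr_refl)
next
  case (pCons a g)
  define y where "y = poly (ci g) z"
  define y' where "y' = poly (ci g) (z ^ p)"
  have yZ: "y \<in> ZZ f" unfolding y_def by (rule ZZ_poly[OF z])
  have y'Z: "y' \<in> ZZ f" unfolding y'_def by (rule ZZ_poly[OF ZZ_power[OF z]])
  have e1: "poly (ci (pCons a g)) z = of_int a + z * y" unfolding y_def by (simp add: of_int_hom.map_poly_pCons_hom)
  have e2: "poly (ci (pCons a g)) (z ^ p) = of_int a + z ^ p * y'" unfolding y'_def by (simp add: of_int_hom.map_poly_pCons_hom)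
  have c1: "cgr f p ((of_int a + z * y) ^ p) ((of_int a) ^ p + (z * y) ^ p)"
    by (rule frob[OF p ZZ_of_int ZZ_mult[OF z yZ]])
  have c2: "cgr f p ((of_int a) ^ p) (of_int a)"
    using cgr_int[OF fermat_int[OF p, of a], of f] by simp
  have c3: "cgr f p ((z * y) ^ p) (z ^ p * y')"
    unfolding power_mult_distrib
    by (rule cgr_mult[OF cgr_refl pCons.IH[folded y_def y'_def] ZZ_power[OF z] y'Z])
  have "cgr f p ((of_int a) ^ p + (z * y) ^ p) (of_int a + z ^ p * y')"
    by (rule cgr_add[OF c2 c3])
  with c1 show ?case unfolding e1 e2 by (rule cgr_trans)
qed

lemma coeff_lemma: fixes P G g :: "int poly" and q c :: int
  assumes m: "monic P" and dP: "degree P > 0" and eq: "smult q g - [:c:] = P * G"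
  shows "q dvd c"
proof (cases "\<forall>e. q dvd coeff G e")
  case True
  have "coeff (P * G) 0 = coeff P 0 * coeff G 0" by (simp add: coeff_mult_0)
  then have "q * coeff g 0 - c = coeff P 0 * coeff G 0" using arg_cong[OF eq, of "\<lambda>p. coeff p 0"] by simp
  then have "c = q * coeff g 0 - coeff P 0 * coeff G 0" by simp
  moreover have "q dvd coeff P 0 * coeff G 0" using True by simp
  ultimately show ?thesis by simp
next
  case False
  define E where "E = {e. \<not> q dvd coeff G e}"
  have fin: "finite E"
  proof (rule finite_subset)
    show "E \<subseteq> {..degree G}"
    proof
      fix e assume "e \<in> E"
      then have "coeff G e \<noteq> 0" unfolding E_def by auto
      then show "e \<in> {..degree G}" by (simp add: le_degree)
    qed
  qed simp
  have ne: "E \<noteq> {}" using False unfolding E_def by auto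
  define e where "e = Max E"
  have eE: "e \<in> E" unfolding e_def using fin ne by (rule Max_in)
  have above: "q dvd coeff G i" if "i > e" for i
  proof (rule ccontr)
    assume "\<not> q dvd coeff G i"
    then have "i \<in> E" unfolding E_def by simp
    then have "i \<le> e" unfolding e_def using fin by simp
    with that show False by simp
  qed
  define D where "D = degree P"
  have "coeff (P * G) (D + e) = (\<Sum>i\<le>D+e. coeff P i * coeff G (D + e - i))" by (rule coeff_mult)
  also have "\<dots> = coeff P D * coeff G (D + e - D) + (\<Sum>i\<in>{..D+e}-{D}. coeff P i * coeff G (D + e - i))"
    by (subst sum.remove[of _ D]) auto
  finally have A: "coeff (P * G) (D + e) = coeff G e + (\<Sum>i\<in>{..D+e}-{D}. coeff P i * coeff G (D + e - i))"
    using m unfolding D_def by simp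
  have B: "q dvd (\<Sum>i\<in>{..D+e}-{D}. coeff P i * coeff G (D + e - i))"
  proof (rule dvd_sum)
    fix i assume i: "i \<in> {..D+e}-{D}"
    show "q dvd coeff P i * coeff G (D + e - i)"
    proof (cases "i < D")
      case True then have "D + e - i > e" by simp
      then show ?thesis using above by simp
    next
      case False then have "i > D" using i by auto
      then have "coeff P i = 0" unfolding D_def by (simp add: coeff_eq_0)
      then show ?thesis by simp
    qed
  qed
  have C: "coeff (P * G) (D + e) = q * coeff g (D + e)"
  proof -
    have "D + e > 0" using dP unfolding D_def by simp
    then obtain m where "D + e = Suc m" by (cases "D + e") auto
    then show ?thesis using arg_cong[OF eq, of "\<lambda>p. coeff p (D+e)"] by simp
  qed
  have "coeff G e = q * coeff g (D + e) - (\<Sum>i\<in>{..D+e}-{D}. coeff P i * coeff G (D + e - i))"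
    using A C by simp
  then have "q dvd coeff G e" using B by simp
  with eE show ?thesis unfolding E_def by simp
qed

lemma ip_deg: assumes f: "f > 0" shows "degree (ip f) > 0"
proof (rule ccontr)
  assume "\<not> degree (ip f) > 0"
  then have "degree (ip f) = 0" by simp
  with ip_monic[OF f] have "ip f = 1" by (metis monic_degree_0)
  with ip_root[OF f] show False by simp
qed



lemma core:
  assumes f: "f > 0" and p: "prime p" and pf: "\<not> p dvd f"
    and rz: "\<rho> \<in> ZZ f" and rf: "\<rho> ^ f = 1" and r0: "poly (ci (ip f)) \<rho> = 0"
  shows "poly (ci (ip f)) (\<rho> ^ p) = 0"
proof (rule ccontr)
  define P where "P = ip f"
  assume nz: "poly (ci (ip f)) (\<rho> ^ p) \<noteq> 0"
  have "P dvd xf f" unfolding P_def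
    by (rule ip_dvd[OF f]) (simp add: poly_ci_xf zeta_pow_eq_1[OF f])
  then obtain H where XH: "xf f = P * H" by (auto elim: dvdE)
  have H0: "poly (ci H) (\<rho> ^ p) = 0"
  proof -
    have "(\<rho> ^ p) ^ f = (\<rho> ^ f) ^ p" by (metis power_mult mult.commute)
    then have "poly (ci (xf f)) (\<rho> ^ p) = 0" unfolding poly_ci_xf using rf by simp
    then have "poly (ci P) (\<rho>^p) * poly (ci H) (\<rho>^p) = 0" unfolding XH by (simp add: of_int_poly_hom.hom_mult)
    with nz show ?thesis unfolding P_def by simp
  qed
  have der: "of_nat f * \<rho> ^ (f - 1) = poly (ci H) \<rho> * poly (ci (pderiv P)) \<rho>"
  proof -
    have d1: "pderiv (ci (xf f)) = ci P * pderiv (ci H) + ci H * pderiv (ci P)"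
      unfolding XH by (simp add: of_int_poly_hom.hom_mult pderiv_mult)
    have d2: "pderiv (ci (xf f)) = monom (of_nat f) (f - 1)"
      unfolding ci_xf by (simp add: pderiv_diff pderiv_monom)
    have d3: "ci (pderiv P) = pderiv (ci P)" by (rule of_int_hom.map_poly_pderiv)
    have "poly (pderiv (ci (xf f))) \<rho> = poly (ci H) \<rho> * poly (ci (pderiv P)) \<rho>"
      unfolding d1 d3 using r0 unfolding P_def by simp
    then show ?thesis unfolding d2 by (simp add: poly_monom)
  qed
  define u where "u = \<rho> * poly (ci (pderiv P)) \<rho>"
  have uZ: "u \<in> ZZ f" unfolding u_def using rz by (intro ZZ_mult ZZ_poly)
  have hu: "poly (ci H) \<rho> * u = of_nat f"
  proof -
    have "poly (ci H) \<rho> * u = \<rho> * (of_nat f * \<rho> ^ (f - 1))" unfolding u_def der by (simp add: algebra_simps)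
    also have "\<dots> = of_nat f * \<rho> ^ f" using f by (cases f) (simp_all add: algebra_simps)
    finally show ?thesis using rf by simp
  qed
  have "cgr f p ((poly (ci H) \<rho>) ^ p) (poly (ci H) (\<rho> ^ p))" by (rule poly_frob[OF p rz])
  then obtain w where wZ: "w \<in> ZZ f" and hw: "(poly (ci H) \<rho>) ^ p = of_nat p * w" unfolding cgr_def H0 by auto
  have fp: "(of_nat f :: complex) ^ p = of_nat p * (w * u ^ p)"
  proof -
    have "(of_nat f :: complex) ^ p = (poly (ci H) \<rho>) ^ p * u ^ p" unfolding hu[symmetric] by (simp add: power_mult_distrib)
    then show ?thesis unfolding hw by (simp add: algebra_simps)
  qed
  have "w * u ^ p \<in> ZZ f" using wZ uZ by (intro ZZ_mult ZZ_power)
  then obtain g where g: "w * u ^ p = poly (ci g) (zeta f)" by (elim ZZ_E)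
  have "poly (ci (smult (int p) g - [: int f ^ p :])) (zeta f) = 0"
    using fp g by (simp add: of_int_poly_hom.hom_minus of_int_hom.map_poly_pCons_hom of_int_hom.map_poly_hom_smult)
  then have "P dvd smult (int p) g - [: int f ^ p :]" unfolding P_def by (rule ip_dvd[OF f])
  then obtain G where "smult (int p) g - [: int f ^ p :] = P * G" by (auto elim: dvdE)
  from coeff_lemma[OF ip_monic[OF f] ip_deg[OF f] this[unfolded P_def]]
  have "int p dvd int f ^ p" .
  then have "int p dvd int (f ^ p)" by simp
  then have "p dvd f ^ p" by (simp only: int_dvd_int_iff)
  then have "p dvd f" using p by (rule prime_dvd_power[rotated])
  with pf show False by simp
qed

lemma roots_prim: assumes f: "f > 0"
  shows "k > 0 \<Longrightarrow> algebraic_semidom_class.coprime k f \<Longrightarrow> poly (ci (ip f)) (zeta f ^ k) = 0"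
proof (induction k rule: less_induct)
  case (less k)
  show ?case
  proof (cases "k = 1")
    case True then show ?thesis using ip_root[OF f] by simp
  next
    case False
    obtain p where p: "prime p" "p dvd k" using prime_factor_nat[OF False] by blast
    then obtain k' where k: "k = p * k'" by (auto elim: dvdE)
    have p1: "p > 1" using p(1) prime_gt_1_nat by blast
    have k'0: "k' > 0" using less.prems k by (cases k') auto
    have k'k: "k' < k" using k p1 k'0 by simp
    have cop: "algebraic_semidom_class.coprime k' f" using less.prems(2) k by simp
    have pf: "\<not> p dvd f"
    proof
      assume "p dvd f"
      with p(2) less.prems(2) have "is_unit p" by (metis coprime_common_divisor)
      with p show False by simp
    qed
    have ih: "poly (ci (ip f)) (zeta f ^ k') = 0" using less.IH[OF k'k k'0 cop] .
    have rf: "(zeta f ^ k') ^ f = 1"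
    proof -
      have "(zeta f ^ k') ^ f = (zeta f ^ f) ^ k'" by (metis power_mult mult.commute)
      then show ?thesis using zeta_pow_eq_1[OF f, of f] by simp
    qed
    have "poly (ci (ip f)) ((zeta f ^ k') ^ p) = 0"
      by (rule core[OF f p(1) pf ZZ_power[OF ZZ_zeta] rf ih])
    then show ?thesis using k by (simp add: power_mult mult.commute)
  qed
qed


lemma xf_ne0: assumes f: "f > 0" shows "ci (xf f) \<noteq> 0"
proof -
  have "lead_coeff (ci (xf f)) = 1" using xf_monic(1)[OF f] by (simp add: of_int_hom.hom_lead_coeff)
  then show ?thesis by auto
qed

lemma zeta_inj_lt: assumes f: "f > 0" shows "inj_on (\<lambda>j. zeta f ^ j) {..<f}"
proof
  fix a b assume a: "a \<in> {..<f}" and b: "b \<in> {..<f}" and e: "zeta f ^ a = zeta f ^ b"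
  have "a mod f = b mod f" by (rule zeta_pow_inj[OF f e])
  then show "a = b" using a b by simp
qed

lemma roots_xf: assumes f: "f > 0"
  shows "{z. poly (ci (xf f)) z = 0} = (\<lambda>j. zeta f ^ j) ` {..<f}"
proof -
  have sub: "(\<lambda>j. zeta f ^ j) ` {..<f} \<subseteq> {z. poly (ci (xf f)) z = 0}"
  proof
    fix z assume "z \<in> (\<lambda>j. zeta f ^ j) ` {..<f}"
    then obtain j where z: "z = zeta f ^ j" by auto
    have "z ^ f = (zeta f ^ f) ^ j" unfolding z by (metis power_mult mult.commute)
    then show "z \<in> {z. poly (ci (xf f)) z = 0}" using zeta_pow_eq_1[OF f, of f] by (simp add: poly_ci_xf)
  qed
  have fin: "finite {z. poly (ci (xf f)) z = 0}" by (rule poly_roots_finite[OF xf_ne0[OF f]])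
  have c1: "card {z. poly (ci (xf f)) z = 0} \<le> f"
    using card_poly_roots_bound[OF xf_ne0[OF f]] xf_monic[OF f] by (simp add: of_int_hom.degree_map_poly_hom)
  have c2: "card ((\<lambda>j. zeta f ^ j) ` {..<f}) = f" using card_image[OF zeta_inj_lt[OF f]] by simp
  show ?thesis using card_subset_eq[OF fin sub] c1 c2 card_mono[OF fin sub] by simp
qed

lemma nonprim_not_root: assumes f: "f > 0" and nc: "\<not> algebraic_semidom_class.coprime j f"
  shows "poly (ci (ip f)) (zeta f ^ j) \<noteq> 0"
proof
  assume root: "poly (ci (ip f)) (zeta f ^ j) = 0"
  define g where "g = gcd j f"
  have g0: "g > 0" unfolding g_def using f by simp
  have g1: "g \<noteq> 1"
  proof
    assume "g = 1"
    then have "algebraic_semidom_class.coprime j f" unfolding g_def by (simp only: coprime_iff_gcd_eq_1)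
    with nc show False by contradiction
  qed
  define d where "d = f div g"
  have gf: "g dvd f" unfolding g_def by simp
  have gj: "g dvd j" unfolding g_def by simp
  have fd: "f = g * d" unfolding d_def using gf by (rule dvd_mult_div_cancel[symmetric])
  have d0: "d > 0" using fd f by (cases d) auto
  have "g \<ge> 2" using g0 g1 by linarith
  then have "2 * d \<le> g * d" by simp
  then have dlt: "d < f" using fd d0 by linarith
  define \<beta> where "\<beta> = zeta f ^ j"
  have bd: "\<beta> ^ d = 1"
  proof -
    obtain j' where j: "j = g * j'" using gj by (auto elim: dvdE)
    have jd: "j * d = f * j'" unfolding j fd by simp
    have "\<beta> ^ d = zeta f ^ (j * d)" unfolding \<beta>_def by (simp only: power_mult)
    also have "\<dots> = zeta f ^ (f * j')" unfolding jd ..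
    finally have "\<beta> ^ d = zeta f ^ (f * j')" .
    also have "\<dots> = 1" using zeta_pow_eq_1[OF f] by simp
    finally show ?thesis .
  qed
  define P where "P = minp f"
  define Q where "Q = ri (xf d)"
  have cP: "cq P = ci (ip f)" using ri_ip[OF f] cq_ri[of "ip f"] unfolding P_def by simp
  have PR: "\<And>z. poly (cq P) z = poly (ci (ip f)) z" unfolding cP ..
  have QR: "\<And>z. poly (cq Q) z = z ^ d - 1" unfolding Q_def cq_ri poly_ci_xf by simp
  have Pb: "poly (cq P) \<beta> = 0" using root PR unfolding \<beta>_def by simp
  have Qb: "poly (cq Q) \<beta> = 0" using QR bd by simp
  have Q0: "Q \<noteq> 0" using xf_ne0[OF d0] unfolding Q_def cq_ri[symmetric] by auto
  define G where "G = gcd P Q"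
  have Gb: "poly (cq G) \<beta> = 0"
  proof -
    have "G = fst (bezout_coefficients P Q) * P + snd (bezout_coefficients P Q) * Q"
      unfolding G_def by (rule bezout_coefficients_fst_snd[symmetric])
    then have "cq G = cq (fst (bezout_coefficients P Q)) * cq P + cq (snd (bezout_coefficients P Q)) * cq Q"
      by (simp add: of_rat_poly_hom.hom_add of_rat_poly_hom.hom_mult)
    then show ?thesis using Pb Qb by simp
  qed
  have G0: "G \<noteq> 0" unfolding G_def using Q0 by simp
  have "G dvd P" unfolding G_def by simp
  then obtain T where PT: "P = G * T" by (auto elim: dvdE)
  have P0: "P \<noteq> 0" using minp(1)[OF f] unfolding P_def by auto
  have T0: "T \<noteq> 0" using PT P0 by auto
  have "poly (cq G) (zeta f) * poly (cq T) (zeta f) = 0"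
    using minp(2)[OF f] unfolding P_def[symmetric] PT by (simp add: of_rat_poly_hom.hom_mult)
  then consider "poly (cq G) (zeta f) = 0" | "poly (cq T) (zeta f) = 0" by auto
  then show False
  proof cases
    case 1
    then have "P dvd G" unfolding P_def by (rule minp(3)[OF f])
    moreover have "G dvd Q" unfolding G_def by simp
    ultimately have "P dvd Q" by (rule dvd_trans)
    then obtain U where "Q = P * U" by (auto elim: dvdE)
    then have "poly (cq Q) (zeta f) = 0" using minp(2)[OF f] unfolding P_def by (simp add: of_rat_poly_hom.hom_mult)
    then have "zeta f ^ d = 1" using QR by simp
    then have "f dvd d" using zeta_pow_eq_1[OF f] by simp
    with d0 dlt show False by (simp add: nat_dvd_not_less)
  next
    case 2
    then have "P dvd T" unfolding P_def by (rule minp(3)[OF f])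
    then have "degree P \<le> degree T" using T0 by (rule dvd_imp_degree_le)
    moreover have "degree P = degree G + degree T" unfolding PT using G0 T0 by (rule degree_mult_eq)
    ultimately have "degree G = 0" by simp
    then obtain c where "G = [:c:]" by (metis degree_eq_zeroE)
    with G0 Gb show False by (simp add: of_rat_hom.map_poly_pCons_hom)
  qed
qed

lemma zeta_inj_tot: assumes f: "f > 0" shows "inj_on (\<lambda>j. zeta f ^ j) (totatives f)"
proof
  fix a b assume a: "a \<in> totatives f" and b: "b \<in> totatives f" and e: "zeta f ^ a = zeta f ^ b"
  have m: "a mod f = b mod f" by (rule zeta_pow_inj[OF f e])
  have a1: "0 < a" "a \<le> f" and b1: "0 < b" "b \<le> f" using a b by (auto simp: totatives_def)
  have aux: "x mod f = 0 \<longleftrightarrow> x = f" if "0 < x" "x \<le> f" for x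
  proof (cases "x = f")
    case False then have "x < f" using that by simp
    then show ?thesis using that by simp
  qed simp
  show "a = b"
  proof (cases "a mod f = 0")
    case True
    then have "a = f" "b = f" using aux[OF a1] aux[OF b1] m by auto
    then show ?thesis by simp
  next
    case False
    then have "a \<noteq> f" "b \<noteq> f" using aux[OF a1] aux[OF b1] m by auto
    then have "a < f" "b < f" using a1 b1 by auto
    then show ?thesis using m by simp
  qed
qed

lemma roots_ip: assumes f: "f > 0"
  shows "{z. poly (ci (ip f)) z = 0} = (\<lambda>k. zeta f ^ k) ` totatives f"
proof
  show "(\<lambda>k. zeta f ^ k) ` totatives f \<subseteq> {z. poly (ci (ip f)) z = 0}"
    using roots_prim[OF f] by (auto simp: totatives_def)
next
  show "{z. poly (ci (ip f)) z = 0} \<subseteq> (\<lambda>k. zeta f ^ k) ` totatives f"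
  proof
    fix z assume z: "z \<in> {z. poly (ci (ip f)) z = 0}"
    have "ip f dvd xf f" by (rule ip_dvd[OF f]) (simp add: poly_ci_xf zeta_pow_eq_1[OF f])
    then obtain H where "xf f = ip f * H" by (auto elim: dvdE)
    then have "poly (ci (xf f)) z = 0" using z by (simp add: of_int_poly_hom.hom_mult)
    then obtain j where j: "j < f" "z = zeta f ^ j" using roots_xf[OF f] by auto
    have cop: "algebraic_semidom_class.coprime j f" using nonprim_not_root[OF f, of j] z j by auto
    show "z \<in> (\<lambda>k. zeta f ^ k) ` totatives f"
    proof (cases "j = 0")
      case True
      then have "f = 1" using cop by simp
      then have "z = zeta f ^ 1" using j True zeta_pow_eq_1[OF f, of 1] by simp
      moreover have "1 \<in> totatives f" using \<open>f = 1\<close> by (simp add: totatives_def)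
      ultimately show ?thesis by blast
    next
      case False
      then have "j \<in> totatives f" using cop j by (simp add: totatives_def)
      then show ?thesis using j by blast
    qed
  qed
qed

lemma degree_ip: assumes f: "f > 0" shows "degree (ip f) = totient f"
proof -
  have "ip f dvd xf f" by (rule ip_dvd[OF f]) (simp add: poly_ci_xf zeta_pow_eq_1[OF f])
  then obtain H where XH: "xf f = ip f * H" by (auto elim: dvdE)
  have ne: "ci (xf f) \<noteq> 0" by (rule xf_ne0[OF f])
  have i0: "ci (ip f) \<noteq> 0" and h0: "ci H \<noteq> 0" using ne unfolding XH by (auto simp: of_int_poly_hom.hom_mult)
  have un: "{z. poly (ci (xf f)) z = 0} = {z. poly (ci (ip f)) z = 0} \<union> {z. poly (ci H) z = 0}"
    unfolding XH by (auto simp: of_int_poly_hom.hom_mult)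
  have "f = card {z. poly (ci (xf f)) z = 0}"
    unfolding roots_xf[OF f] using card_image[OF zeta_inj_lt[OF f]] by simp
  also have "\<dots> \<le> card {z. poly (ci (ip f)) z = 0} + card {z. poly (ci H) z = 0}"
    unfolding un by (rule card_Un_le)
  finally have A: "f \<le> card {z. poly (ci (ip f)) z = 0} + card {z. poly (ci H) z = 0}" .
  have B: "card {z. poly (ci (ip f)) z = 0} \<le> degree (ip f)"
    using card_poly_roots_bound[OF i0] by (simp add: of_int_hom.degree_map_poly_hom)
  have C: "card {z. poly (ci H) z = 0} \<le> degree H"
    using card_poly_roots_bound[OF h0] by (simp add: of_int_hom.degree_map_poly_hom)
  have D: "degree (ip f) + degree H = f"
    using xf_monic(2)[OF f] unfolding XH using i0 h0 by (simp add: degree_mult_eq)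
  have "card {z. poly (ci (ip f)) z = 0} = degree (ip f)" using A B C D by linarith
  then show ?thesis unfolding roots_ip[OF f] card_image[OF zeta_inj_tot[OF f]] totient_def by simp
qed

lemma degree_minp: "f > 0 \<Longrightarrow> degree (minp f) = totient f"
  using degree_ip ri_ip by (metis of_int_hom.degree_map_poly_hom)


lemma poly_sum_lt: fixes p :: "complex poly" assumes "degree p < n" shows "poly p x = (\<Sum>j<n. coeff p j * x ^ j)"
proof -
  have "poly p x = (\<Sum>i\<le>degree p. coeff p i * x ^ i)" by (rule poly_altdef)
  also have "\<dots> = (\<Sum>j<n. coeff p j * x ^ j)"
  proof (rule sum.mono_neutral_left)
    show "{..degree p} \<subseteq> {..<n}" using assms by auto
    show "\<forall>i\<in>{..<n} - {..degree p}. coeff p i * x ^ i = 0" by (auto simp: coeff_eq_0)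
  qed simp
  finally show ?thesis .
qed

definition bpoly :: "nat \<Rightarrow> (nat \<Rightarrow> rat) \<Rightarrow> rat poly" where
  "bpoly f c = (\<Sum>j<totient f. monom (c j) j)"

lemma poly_bpoly: "poly (cq (bpoly f c)) x = (\<Sum>j<totient f. of_rat (c j) * x ^ j)"
  unfolding bpoly_def by (simp add: of_rat_poly_hom.hom_sum of_rat_hom.map_poly_hom_monom poly_sum poly_monom)

lemma pbc_bpoly: "powbasis_comb f c = poly (cq (bpoly f c)) (zeta f)"
  unfolding powbasis_comb_def poly_bpoly ..

lemma coeff_bpoly: "coeff (bpoly f c) j = (if j < totient f then c j else 0)"
  unfolding bpoly_def by (simp add: coeff_sum coeff_monom)

lemma degree_bpoly: assumes "totient f > 0" shows "degree (bpoly f c) < totient f"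
proof -
  have "degree (bpoly f c) \<le> totient f - 1"
    by (rule degree_le) (auto simp: coeff_bpoly)
  from this assms show ?thesis by linarith
qed

lemma totient_pos: "f > 0 \<Longrightarrow> totient f > 0" by simp

lemma pbc_LI: assumes f: "f > 0" and z: "powbasis_comb f c = 0" and j: "j < totient f"
  shows "c j = 0"
proof -
  have "poly (cq (bpoly f c)) (zeta f) = 0" using z unfolding pbc_bpoly .
  then have dv: "minp f dvd bpoly f c" by (rule minp(3)[OF f])
  have "bpoly f c = 0"
  proof (rule ccontr)
    assume "bpoly f c \<noteq> 0"
    from dvd_imp_degree_le[OF dv this] have "degree (minp f) \<le> degree (bpoly f c)" .
    with degree_bpoly[OF totient_pos[OF f], of c] degree_minp[OF f] show False by linarith
  qed
  then have "coeff (bpoly f c) j = 0" by simp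
  then show ?thesis using j by (simp add: coeff_bpoly)
qed

lemma pbc_diff: "powbasis_comb f (\<lambda>j. c j - c' j) = powbasis_comb f c - powbasis_comb f c'"
  unfolding powbasis_comb_def by (simp add: of_rat_diff algebra_simps sum_subtractf)

lemma pbc_trunc: "powbasis_comb f (\<lambda>j. if j < totient f then c j else 0) = powbasis_comb f c"
  unfolding powbasis_comb_def by (rule sum.cong) auto

lemma coords_pbc: assumes f: "f > 0"
  shows "coords f (powbasis_comb f c) = (\<lambda>j. if j < totient f then c j else 0)"
  unfolding coords_def
proof (rule the_equality)
  show "(\<forall>j. totient f \<le> j \<longrightarrow> (if j < totient f then c j else 0) = 0) \<and>
    powbasis_comb f c = powbasis_comb f (\<lambda>j. if j < totient f then c j else 0)"
    using pbc_trunc by simp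
next
  fix c' assume c': "(\<forall>j. totient f \<le> j \<longrightarrow> c' j = 0) \<and> powbasis_comb f c = powbasis_comb f c'"
  show "c' = (\<lambda>j. if j < totient f then c j else 0)"
  proof
    fix j
    show "c' j = (if j < totient f then c j else 0)"
    proof (cases "j < totient f")
      case True
      have "powbasis_comb f (\<lambda>j. c j - c' j) = 0" using c' by (simp add: pbc_diff)
      from pbc_LI[OF f this True] True show ?thesis by simp
    next
      case False then show ?thesis using c' by simp
    qed
  qed
qed

lemma poly_mod_minp: assumes f: "f > 0" and x: "poly (cq (minp f)) x = 0"
  shows "poly (cq R) x = poly (cq (R mod minp f)) x"
proof -
  have "R = R div minp f * minp f + R mod minp f" by simp
  then have "cq R = cq (R div minp f) * cq (minp f) + cq (R mod minp f)"
    by (metis of_rat_poly_hom.hom_add of_rat_poly_hom.hom_mult)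
  then show ?thesis using x by simp
qed

lemma degree_mod_minp: assumes f: "f > 0" shows "degree (R mod minp f) < totient f"
proof -
  have P0: "minp f \<noteq> 0" using minp(1)[OF f] by auto
  show ?thesis
  proof (cases "R mod minp f = 0")
    case True then show ?thesis using totient_pos[OF f] by simp
  next
    case False
    then show ?thesis using degree_mod_less[OF P0, of R] degree_minp[OF f] by simp
  qed
qed

lemma poly_as_pbc: assumes f: "f > 0"
  shows "poly (cq R) (zeta f) = powbasis_comb f (\<lambda>j. coeff (R mod minp f) j)"
proof -
  have "poly (cq R) (zeta f) = poly (cq (R mod minp f)) (zeta f)"
    by (rule poly_mod_minp[OF f minp(2)[OF f]])
  also have "\<dots> = (\<Sum>j<totient f. coeff (cq (R mod minp f)) j * zeta f ^ j)"
    by (rule poly_sum_lt) (simp add: of_rat_hom.degree_map_poly_hom degree_mod_minp[OF f])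
  also have "\<dots> = powbasis_comb f (\<lambda>j. coeff (R mod minp f) j)"
    unfolding powbasis_comb_def by (simp add: coeff_map_poly)
  finally show ?thesis .
qed

lemma K_iff: assumes f: "f > 0" shows "z \<in> Kf f \<longleftrightarrow> (\<exists>R. z = poly (cq R) (zeta f))"
proof
  assume "z \<in> Kf f"
  then obtain c where "z = powbasis_comb f c" unfolding Kf_def by auto
  then show "\<exists>R. z = poly (cq R) (zeta f)" unfolding pbc_bpoly by blast
next
  assume "\<exists>R. z = poly (cq R) (zeta f)"
  then obtain R where "z = poly (cq R) (zeta f)" by auto
  then show "z \<in> Kf f" unfolding Kf_def poly_as_pbc[OF f] by blast
qed

lemma sigma_poly: assumes f: "f > 0" and k: "k \<in> totatives f"
  shows "sigma f k (poly (cq R) (zeta f)) = poly (cq R) (zeta f ^ k)"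
proof -
  define Rm where "Rm = R mod minp f"
  have cP: "cq (minp f) = ci (ip f)" using ri_ip[OF f] cq_ri[of "ip f"] by simp
  have kr: "poly (cq (minp f)) (zeta f ^ k) = 0"
    unfolding cP using k roots_prim[OF f, of k] by (auto simp: totatives_def)
  have "sigma f k (poly (cq R) (zeta f)) = (\<Sum>j<totient f. of_rat (coords f (powbasis_comb f (coeff Rm)) j) * zeta f ^ (j * k))"
    unfolding sigma_def poly_as_pbc[OF f] Rm_def ..
  also have "\<dots> = (\<Sum>j<totient f. of_rat (coeff Rm j) * (zeta f ^ k) ^ j)"
    unfolding coords_pbc[OF f] by (intro sum.cong refl) (simp add: power_mult[symmetric] mult.commute)
  also have "\<dots> = poly (cq Rm) (zeta f ^ k)"
    by (subst poly_sum_lt[of _ "totient f"]) (simp_all add: of_rat_hom.degree_map_poly_hom degree_mod_minp[OF f] Rm_def coeff_map_poly)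
  also have "\<dots> = poly (cq R) (zeta f ^ k)" unfolding Rm_def by (rule poly_mod_minp[OF f kr, symmetric])
  finally show ?thesis .
qed


lemma of_rat_complex: "(of_rat q :: complex) = of_real (of_rat q)"
  by (cases q) (simp add: of_rat_rat)

lemma cq_real: "coeff (cq R) n \<in> \<real>"
  by (simp add: coeff_map_poly of_rat_complex)

lemma cnj_poly_cq: "cnj (poly (cq R) z) = poly (cq R) (cnj z)"
  by (rule poly_cnj_real) (rule cq_real)

lemma K_add: "f > 0 \<Longrightarrow> z \<in> Kf f \<Longrightarrow> w \<in> Kf f \<Longrightarrow> z + w \<in> Kf f"
  unfolding K_iff by (metis of_rat_poly_hom.hom_add poly_add)

lemma K_mult: "f > 0 \<Longrightarrow> z \<in> Kf f \<Longrightarrow> w \<in> Kf f \<Longrightarrow> z * w \<in> Kf f"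
  unfolding K_iff by (metis of_rat_poly_hom.hom_mult poly_mult)

lemma K_diff: "f > 0 \<Longrightarrow> z \<in> Kf f \<Longrightarrow> w \<in> Kf f \<Longrightarrow> z - w \<in> Kf f"
  unfolding K_iff by (metis of_rat_poly_hom.hom_minus poly_diff)

lemma K_const: assumes f: "f > 0" shows "of_rat q \<in> Kf f"
proof -
  have "of_rat q = poly (cq [:q:]) (zeta f)" by (simp add: of_rat_hom.map_poly_pCons_hom)
  then show ?thesis unfolding K_iff[OF f] by blast
qed

lemma K_0: "f > 0 \<Longrightarrow> 0 \<in> Kf f" using K_const[of f 0] by simp
lemma K_1: "f > 0 \<Longrightarrow> 1 \<in> Kf f" using K_const[of f 1] by simp

lemma K_sum: assumes f: "f > 0" shows "finite A \<Longrightarrow> (\<And>x. x \<in> A \<Longrightarrow> h x \<in> Kf f) \<Longrightarrow> sum h A \<in> Kf f"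
  by (induction A rule: finite_induct) (auto intro: K_add[OF f] K_0[OF f])

lemma sigma_add: assumes f: "f > 0" and k: "k \<in> totatives f" and z: "z \<in> Kf f" and w: "w \<in> Kf f"
  shows "sigma f k (z + w) = sigma f k z + sigma f k w"
proof -
  obtain R where R: "z = poly (cq R) (zeta f)" using z unfolding K_iff[OF f] by blast
  obtain S where S: "w = poly (cq S) (zeta f)" using w unfolding K_iff[OF f] by blast
  have e: "z + w = poly (cq (R + S)) (zeta f)" unfolding R S by (simp add: of_rat_poly_hom.hom_add)
  have "sigma f k (z + w) = poly (cq (R + S)) (zeta f ^ k)" unfolding e by (rule sigma_poly[OF f k])
  also have "\<dots> = poly (cq R) (zeta f ^ k) + poly (cq S) (zeta f ^ k)" by (simp add: of_rat_poly_hom.hom_add)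
  also have "\<dots> = sigma f k z + sigma f k w" unfolding R S sigma_poly[OF f k] ..
  finally show ?thesis .
qed

lemma sigma_mult: assumes f: "f > 0" and k: "k \<in> totatives f" and z: "z \<in> Kf f" and w: "w \<in> Kf f"
  shows "sigma f k (z * w) = sigma f k z * sigma f k w"
proof -
  obtain R where R: "z = poly (cq R) (zeta f)" using z unfolding K_iff[OF f] by blast
  obtain S where S: "w = poly (cq S) (zeta f)" using w unfolding K_iff[OF f] by blast
  have e: "z * w = poly (cq (R * S)) (zeta f)" unfolding R S by (simp add: of_rat_poly_hom.hom_mult)
  have "sigma f k (z * w) = poly (cq (R * S)) (zeta f ^ k)" unfolding e by (rule sigma_poly[OF f k])
  also have "\<dots> = poly (cq R) (zeta f ^ k) * poly (cq S) (zeta f ^ k)" by (simp add: of_rat_poly_hom.hom_mult)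
  also have "\<dots> = sigma f k z * sigma f k w" unfolding R S sigma_poly[OF f k] ..
  finally show ?thesis .
qed

lemma sigma_diff: assumes f: "f > 0" and k: "k \<in> totatives f" and z: "z \<in> Kf f" and w: "w \<in> Kf f"
  shows "sigma f k (z - w) = sigma f k z - sigma f k w"
proof -
  obtain R where R: "z = poly (cq R) (zeta f)" using z unfolding K_iff[OF f] by blast
  obtain S where S: "w = poly (cq S) (zeta f)" using w unfolding K_iff[OF f] by blast
  have e: "z - w = poly (cq (R - S)) (zeta f)" unfolding R S by (simp add: of_rat_poly_hom.hom_minus)
  have "sigma f k (z - w) = poly (cq (R - S)) (zeta f ^ k)" unfolding e by (rule sigma_poly[OF f k])
  also have "\<dots> = poly (cq R) (zeta f ^ k) - poly (cq S) (zeta f ^ k)" by (simp add: of_rat_poly_hom.hom_minus)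
  also have "\<dots> = sigma f k z - sigma f k w" unfolding R S sigma_poly[OF f k] ..
  finally show ?thesis .
qed

lemma sigma_const: assumes f: "f > 0" and k: "k \<in> totatives f" shows "sigma f k (of_rat q) = of_rat q"
proof -
  have "of_rat q = poly (cq [:q:]) (zeta f)" by (simp add: of_rat_hom.map_poly_pCons_hom)
  then show ?thesis using sigma_poly[OF f k, of "[:q:]"] by (simp add: of_rat_hom.map_poly_pCons_hom)
qed

lemma sigma_0: "f > 0 \<Longrightarrow> k \<in> totatives f \<Longrightarrow> sigma f k 0 = 0" using sigma_const[of f k 0] by simp
lemma sigma_1: "f > 0 \<Longrightarrow> k \<in> totatives f \<Longrightarrow> sigma f k 1 = 1" using sigma_const[of f k 1] by simp

lemma sigma_sum: assumes f: "f > 0" and k: "k \<in> totatives f"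
  shows "finite A \<Longrightarrow> (\<And>x. x \<in> A \<Longrightarrow> h x \<in> Kf f) \<Longrightarrow> sigma f k (sum h A) = (\<Sum>x\<in>A. sigma f k (h x))"
proof (induction A rule: finite_induct)
  case empty then show ?case using sigma_0[OF f k] by simp
next
  case (insert x A)
  have "sigma f k (sum h (insert x A)) = sigma f k (h x + sum h A)" using insert by simp
  also have "\<dots> = sigma f k (h x) + sigma f k (sum h A)"
    by (rule sigma_add[OF f k]) (use insert in \<open>auto intro: K_sum[OF f]\<close>)
  finally show ?case using insert by simp
qed

lemma sigma_cnj: assumes f: "f > 0" and k: "k \<in> totatives f" and z: "z \<in> Kf f"
  shows "cnj z \<in> Kf f" "sigma f k (cnj z) = cnj (sigma f k z)"
proof -
  obtain R where R: "z = poly (cq R) (zeta f)" using z unfolding K_iff[OF f] by blast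
  define R' where "R' = R \<circ>\<^sub>p monom 1 (f - 1)"
  have ev: "poly (cq R') x = poly (cq R) (x ^ (f - 1))" for x
    unfolding R'_def by (simp add: of_rat_hom.map_poly_pcompose poly_pcompose of_rat_hom.map_poly_hom_monom poly_monom)
  have c1: "cnj z = poly (cq R') (zeta f)"
    unfolding R ev cnj_poly_cq using cnj_zeta_pow[OF f, of 1] by simp
  then show "cnj z \<in> Kf f" unfolding K_iff[OF f] by blast
  have "sigma f k (cnj z) = poly (cq R') (zeta f ^ k)" unfolding c1 by (rule sigma_poly[OF f k])
  also have "\<dots> = poly (cq R) ((zeta f ^ k) ^ (f - 1))" by (rule ev)
  also have "\<dots> = poly (cq R) (cnj (zeta f ^ k))" unfolding cnj_zeta_pow[OF f] ..
  also have "\<dots> = cnj (poly (cq R) (zeta f ^ k))" by (simp add: cnj_poly_cq)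
  also have "\<dots> = cnj (sigma f k z)" unfolding R sigma_poly[OF f k] ..
  finally show "sigma f k (cnj z) = cnj (sigma f k z)" .
qed

lemma sigma_pbc: assumes f: "f > 0" and k: "k \<in> totatives f"
  shows "sigma f k (powbasis_comb f c) = (\<Sum>j<totient f. of_rat (c j) * (zeta f ^ k) ^ j)"
proof -
  have "sigma f k (powbasis_comb f c) = poly (cq (bpoly f c)) (zeta f ^ k)"
    unfolding pbc_bpoly by (rule sigma_poly[OF f k])
  then show ?thesis unfolding poly_bpoly .
qed

lemma pbc_in_K: "f > 0 \<Longrightarrow> powbasis_comb f c \<in> Kf f"
  unfolding Kf_def by blast

lemma norm_sigma_pbc: assumes f: "f > 0" and k: "k \<in> totatives f" and c: "\<forall>l<totient f. \<bar>c l\<bar> \<le> 1"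
  shows "norm (sigma f k (powbasis_comb f c)) \<le> real (totient f)"
proof -
  have "norm (sigma f k (powbasis_comb f c)) \<le> (\<Sum>j<totient f. norm (of_rat (c j) * (zeta f ^ k) ^ j :: complex))"
    unfolding sigma_pbc[OF f k] by (rule norm_sum)
  also have "\<dots> \<le> (\<Sum>j<totient f. 1)"
  proof (rule sum_mono)
    fix j assume j: "j \<in> {..<totient f}"
    have "norm (of_rat (c j) * (zeta f ^ k) ^ j :: complex) = \<bar>of_rat (c j)\<bar>"
      by (simp add: norm_mult norm_power zeta_def norm_cis of_rat_complex)
    also have "\<dots> \<le> 1" using c j by simp
    finally show "norm (of_rat (c j) * (zeta f ^ k) ^ j :: complex) \<le> 1" .
  qed
  finally show ?thesis by simp
qed

lemma trK_set: "{k \<in> {1..f}. algebraic_semidom_class.coprime k f} = totatives f"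
  unfolding totatives_def by auto

lemma trK_norm: assumes f: "f > 0" and z: "z \<in> Kf f"
  shows "trK f (z * cnj z) = of_real (\<Sum>k\<in>totatives f. (norm (sigma f k z))^2)"
proof -
  have "trK f (z * cnj z) = (\<Sum>k\<in>totatives f. sigma f k (z * cnj z))"
    unfolding trK_def trK_set ..
  also have "\<dots> = (\<Sum>k\<in>totatives f. of_real ((norm (sigma f k z))^2))"
  proof (rule sum.cong[OF refl])
    fix k assume k: "k \<in> totatives f"
    have "sigma f k (z * cnj z) = sigma f k z * cnj (sigma f k z)"
      using sigma_mult[OF f k z sigma_cnj(1)[OF f k z]] sigma_cnj(2)[OF f k z] by simp
    then show "sigma f k (z * cnj z) = of_real ((norm (sigma f k z))^2)"
      unfolding complex_norm_square .
  qed
  finally show ?thesis by simp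
qed


lemma cs_real:
  fixes a b :: "'a \<Rightarrow> real"
  shows "(\<Sum>i\<in>I. a i * b i)\<^sup>2 \<le> (\<Sum>i\<in>I. (a i)\<^sup>2) * (\<Sum>i\<in>I. (b i)\<^sup>2)"
proof (cases "(\<Sum>i\<in>I. (b i)\<^sup>2) > 0")
  case False
  then consider "\<And>i. i\<in>I \<Longrightarrow> b i = 0" | "infinite I"
    by (metis (mono_tags, lifting) sum_pos2 zero_le_power2 zero_less_power2)
  thus ?thesis
    by fastforce
next
  case True
  define r where "r \<equiv> (\<Sum>i\<in>I. a i * b i) / (\<Sum>i\<in>I. (b i)\<^sup>2)"
  have "0 \<le> (\<Sum>i\<in>I. (a i - r * b i)\<^sup>2)"
    by (simp add: sum_nonneg)
  also have "... = (\<Sum>i\<in>I. (a i)\<^sup>2) - 2 * r * (\<Sum>i\<in>I. a i * b i) + r\<^sup>2 * (\<Sum>i\<in>I. (b i)\<^sup>2)"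
    by (simp add: algebra_simps power2_eq_square sum_distrib_left flip: sum.distrib)
  also have "\<dots> = (\<Sum>i\<in>I. (a i)\<^sup>2) - ((\<Sum>i\<in>I. a i * b i))\<^sup>2 / (\<Sum>i\<in>I. (b i)\<^sup>2)"
    by (simp add: r_def power2_eq_square)
  finally have "0 \<le> (\<Sum>i\<in>I. (a i)\<^sup>2) - ((\<Sum>i\<in>I. a i * b i))\<^sup>2 / (\<Sum>i\<in>I. (b i)\<^sup>2)" .
  hence "((\<Sum>i\<in>I. a i * b i))\<^sup>2 / (\<Sum>i\<in>I. (b i)\<^sup>2) \<le> (\<Sum>i\<in>I. (a i)\<^sup>2)"
    by (simp add: le_diff_eq)
  thus "((\<Sum>i\<in>I. a i * b i))\<^sup>2 \<le> (\<Sum>i\<in>I. (a i)\<^sup>2) * (\<Sum>i\<in>I. (b i)\<^sup>2)"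
    by (simp add: pos_divide_le_eq True)
qed

lemma norm_sum_prod_sq:
  fixes u v :: "'a \<Rightarrow> complex"
  shows "(norm (\<Sum>j\<in>J. u j * v j))\<^sup>2 \<le> (\<Sum>j\<in>J. (norm (u j))\<^sup>2) * (\<Sum>j\<in>J. (norm (v j))\<^sup>2)"
proof -
  have "norm (\<Sum>j\<in>J. u j * v j) \<le> (\<Sum>j\<in>J. norm (u j) * norm (v j))"
    by (metis (no_types, lifting) norm_mult norm_sum sum.cong)
  then have "(norm (\<Sum>j\<in>J. u j * v j))\<^sup>2 \<le> (\<Sum>j\<in>J. norm (u j) * norm (v j))\<^sup>2"
    by (rule power_mono) simp
  also have "\<dots> \<le> (\<Sum>j\<in>J. (norm (u j))\<^sup>2) * (\<Sum>j\<in>J. (norm (v j))\<^sup>2)" by (rule cs_real)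
  finally show ?thesis .
qed

lemma vnorm_eq: assumes f: "f > 0" and x: "\<forall>t<d. x t \<in> Kf f"
  shows "vnorm f d x = sqrt (\<Sum>t<d. \<Sum>k\<in>totatives f. (norm (sigma f k (x t)))\<^sup>2)"
proof -
  have "herm f d x x = (\<Sum>t<d. of_real (\<Sum>k\<in>totatives f. (norm (sigma f k (x t)))\<^sup>2))"
    unfolding herm_def using x by (intro sum.cong refl) (simp add: trK_norm[OF f])
  also have "\<dots> = of_real (\<Sum>t<d. \<Sum>k\<in>totatives f. (norm (sigma f k (x t)))\<^sup>2)" by simp
  finally show ?thesis unfolding vnorm_def by simp
qed

lemma mulv_K: assumes f: "f > 0" and M: "\<forall>i<d. \<forall>j<d. M i j \<in> Kf f" and x: "\<forall>t<d. x t \<in> Kf f"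
  and i: "i < d"
  shows "mulv d M x i \<in> Kf f"
    "k \<in> totatives f \<Longrightarrow> sigma f k (mulv d M x i) = (\<Sum>j<d. sigma f k (M i j) * sigma f k (x j))"
proof -
  show "mulv d M x i \<in> Kf f" unfolding mulv_def using M x i by (intro K_sum[OF f] K_mult[OF f]) auto
  assume k: "k \<in> totatives f"
  have "sigma f k (mulv d M x i) = (\<Sum>j<d. sigma f k (M i j * x j))"
    unfolding mulv_def using M x i by (intro sigma_sum[OF f k] K_mult[OF f]) auto
  also have "\<dots> = (\<Sum>j<d. sigma f k (M i j) * sigma f k (x j))"
    using M x i by (intro sum.cong refl sigma_mult[OF f k]) auto
  finally show "sigma f k (mulv d M x i) = (\<Sum>j<d. sigma f k (M i j) * sigma f k (x j))" .
qed

lemma vnorm_mulv: assumes f: "f > 0" and M: "\<forall>i<d. \<forall>j<d. M i j \<in> Kf f" and x: "\<forall>t<d. x t \<in> Kf f"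
  and b: "b \<ge> 0" and Mb: "\<forall>k\<in>totatives f. \<forall>i<d. \<forall>j<d. norm (sigma f k (M i j)) \<le> b"
  shows "vnorm f d (mulv d M x) \<le> real d * b * vnorm f d x"
proof -
  define T where "T = totatives f"
  define X where "X = (\<lambda>k j. sigma f k (x j))"
  define Sx where "Sx = (\<Sum>t<d. \<Sum>k\<in>T. (norm (X k t))\<^sup>2)"
  have yK: "\<forall>t<d. mulv d M x t \<in> Kf f" using mulv_K(1)[OF f M x] by blast
  have vy: "vnorm f d (mulv d M x) = sqrt (\<Sum>i<d. \<Sum>k\<in>T. (norm (\<Sum>j<d. sigma f k (M i j) * X k j))\<^sup>2)"
    unfolding vnorm_eq[OF f yK] T_def X_def
    by (intro arg_cong[where f=sqrt] sum.cong refl) (simp add: mulv_K(2)[OF f M x])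
  have vx: "vnorm f d x = sqrt Sx" unfolding vnorm_eq[OF f x] Sx_def T_def X_def ..
  have trm: "(norm (\<Sum>j<d. sigma f k (M i j) * X k j))\<^sup>2 \<le> real d * b\<^sup>2 * (\<Sum>j<d. (norm (X k j))\<^sup>2)"
    if k: "k \<in> T" and i: "i < d" for k i
  proof -
    have "(norm (\<Sum>j<d. sigma f k (M i j) * X k j))\<^sup>2 \<le> (\<Sum>j<d. (norm (sigma f k (M i j)))\<^sup>2) * (\<Sum>j<d. (norm (X k j))\<^sup>2)"
      by (rule norm_sum_prod_sq)
    also have "\<dots> \<le> (\<Sum>j<d. b\<^sup>2) * (\<Sum>j<d. (norm (X k j))\<^sup>2)"
    proof (rule mult_right_mono)
      show "(\<Sum>j<d. (norm (sigma f k (M i j)))\<^sup>2) \<le> (\<Sum>j<d. b\<^sup>2)"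
        using Mb k i unfolding T_def by (intro sum_mono power_mono) auto
    qed (simp add: sum_nonneg)
    finally show ?thesis by simp
  qed
  define Q where "Q = (\<lambda>k. \<Sum>j<d. (norm (X k j))\<^sup>2)"
  define c where "c = real d * b\<^sup>2"
  have "(\<Sum>i<d. \<Sum>k\<in>T. (norm (\<Sum>j<d. sigma f k (M i j) * X k j))\<^sup>2)
      \<le> (\<Sum>i<d. \<Sum>k\<in>T. c * Q k)"
    using trm unfolding c_def Q_def by (intro sum_mono) auto
  also have "\<dots> = (\<Sum>i<d. c * (\<Sum>k\<in>T. Q k))" by (simp only: sum_distrib_left)
  also have "\<dots> = real d * (c * (\<Sum>k\<in>T. Q k))" by simp
  also have "(\<Sum>k\<in>T. Q k) = Sx" unfolding Sx_def Q_def by (rule sum.swap)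
  also have "real d * (c * Sx) = (real d * b)\<^sup>2 * Sx" unfolding c_def by (simp add: power2_eq_square)
  finally have le: "(\<Sum>i<d. \<Sum>k\<in>T. (norm (\<Sum>j<d. sigma f k (M i j) * X k j))\<^sup>2) \<le> (real d * b)\<^sup>2 * Sx" .
  have "vnorm f d (mulv d M x) \<le> sqrt ((real d * b)\<^sup>2 * Sx)" unfolding vy using le by (rule real_sqrt_le_mono)
  also have "\<dots> = real d * b * sqrt Sx" using b by (simp add: real_sqrt_mult)
  finally show ?thesis unfolding vx .
qed

lemma opnorm_le: assumes f: "f > 0" and d: "d > 0" and M: "\<forall>i<d. \<forall>j<d. M i j \<in> Kf f"
  and b: "b \<ge> 0" and Mb: "\<forall>k\<in>totatives f. \<forall>i<d. \<forall>j<d. norm (sigma f k (M i j)) \<le> b"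
  shows "opnorm f d M \<le> real d * b"
  unfolding opnorm_def
proof (rule cSup_least)
  show "{vnorm f d (mulv d M x) / vnorm f d x |x. (\<forall>t<d. x t \<in> Kf f) \<and> (\<exists>t<d. x t \<noteq> 0)} \<noteq> {}"
  proof
    define x0 :: "nat \<Rightarrow> complex" where "x0 = (\<lambda>t. 1)"
    have P: "(\<forall>t<d. x0 t \<in> Kf f) \<and> (\<exists>t<d. x0 t \<noteq> 0)" unfolding x0_def using K_1[OF f] d by auto
    have mem: "vnorm f d (mulv d M x0) / vnorm f d x0 \<in> {vnorm f d (mulv d M x) / vnorm f d x |x. (\<forall>t<d. x t \<in> Kf f) \<and> (\<exists>t<d. x t \<noteq> 0)}"
      by (rule CollectI, rule exI[of _ x0], rule conjI[OF refl P])
    assume "{vnorm f d (mulv d M x) / vnorm f d x |x. (\<forall>t<d. x t \<in> Kf f) \<and> (\<exists>t<d. x t \<noteq> 0)} = {}"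
    with mem show False by (simp only: empty_iff)
  qed
next
  fix r assume "r \<in> {vnorm f d (mulv d M x) / vnorm f d x |x. (\<forall>t<d. x t \<in> Kf f) \<and> (\<exists>t<d. x t \<noteq> 0)}"
  then have "\<exists>x. r = vnorm f d (mulv d M x) / vnorm f d x \<and> (\<forall>t<d. x t \<in> Kf f) \<and> (\<exists>t<d. x t \<noteq> 0)"
    by (simp only: mem_Collect_eq)
  then obtain x where r: "r = vnorm f d (mulv d M x) / vnorm f d x" and x: "\<forall>t<d. x t \<in> Kf f"
    by (elim exE conjE)
  have le: "vnorm f d (mulv d M x) \<le> real d * b * vnorm f d x" by (rule vnorm_mulv[OF f M x b Mb])
  have v0: "vnorm f d x \<ge> 0" unfolding vnorm_eq[OF f x] by (simp add: sum_nonneg)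
  show "r \<le> real d * b"
  proof (cases "vnorm f d x = 0")
    case True
    have "r = 0" unfolding r True by simp
    then show ?thesis using b by simp
  next
    case False
    then have pos: "vnorm f d x > 0" using v0 by simp
    show ?thesis unfolding r pos_divide_le_eq[OF pos] using le .
  qed
qed


lemma geo_aux: fixes x :: real
  shows "(\<Sum>j\<in>{i<..<Suc i + m}. x * (x + 1) ^ (i + m - j)) = (x + 1) ^ m - 1"
proof (induction m)
  case 0 then show ?case by simp
next
  case (Suc m)
  have A: "{i<..<Suc i + Suc m} = insert (Suc i + m) {i<..<Suc i + m}" by auto
  have B: "(\<Sum>j\<in>{i<..<Suc i + m}. x * (x + 1) ^ (i + Suc m - j)) = (x + 1) * (\<Sum>j\<in>{i<..<Suc i + m}. x * (x + 1) ^ (i + m - j))"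
    unfolding sum_distrib_left
  proof (rule sum.cong[OF refl])
    fix j assume "j \<in> {i<..<Suc i + m}"
    then have "i + Suc m - j = Suc (i + m - j)" by auto
    then show "x * (x + 1) ^ (i + Suc m - j) = (x + 1) * (x * (x + 1) ^ (i + m - j))" by simp
  qed
  have "(\<Sum>j\<in>{i<..<Suc i + Suc m}. x * (x + 1) ^ (i + Suc m - j))
      = x * (x + 1) ^ (i + Suc m - (Suc i + m)) + (\<Sum>j\<in>{i<..<Suc i + m}. x * (x + 1) ^ (i + Suc m - j))"
    unfolding A by (rule sum.insert) auto
  also have "\<dots> = x + (x + 1) * ((x + 1) ^ m - 1)" unfolding B Suc by simp
  also have "\<dots> = (x + 1) ^ Suc m - 1" by (simp add: algebra_simps)
  finally show ?case .
qed

lemma geo: fixes x :: real assumes "i < d"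
  shows "(\<Sum>j\<in>{i<..<d}. x * (x + 1) ^ (d - 1 - j)) = (x + 1) ^ (d - 1 - i) - 1"
proof -
  define m where "m = d - 1 - i"
  have d: "d = Suc i + m" unfolding m_def using assms by simp
  have "(\<Sum>j\<in>{i<..<d}. x * (x + 1) ^ (d - 1 - j)) = (\<Sum>j\<in>{i<..<Suc i + m}. x * (x + 1) ^ (i + m - j))"
    unfolding d by simp
  also have "\<dots> = (x + 1) ^ m - 1" by (rule geo_aux)
  finally show ?thesis unfolding m_def .
qed

lemma backsub:
  assumes f: "f > 0" and k: "k < d"
  and Atri: "\<forall>i<d. \<forall>j<d. j < i \<longrightarrow> A i j = 0" and Adiag: "\<forall>i<d. A i i = 1"
  and AK: "\<forall>i<d. \<forall>j<d. A i j \<in> Kf f"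
  and Ab: "\<forall>s\<in>totatives f. \<forall>i<d. \<forall>j<d. norm (sigma f s (A i j)) \<le> real (totient f)"
  and AB: "\<forall>i<d. \<forall>k<d. matmul d A B i k = (if i = k then 1 else 0)"
  shows "i < d \<Longrightarrow> B i k \<in> Kf f \<and> (\<forall>s\<in>totatives f. norm (sigma f s (B i k)) \<le> (real (totient f) + 1) ^ (d - 1 - i))"
proof (induction "d - i" arbitrary: i rule: less_induct)
  case less
  define n where "n = real (totient f)"
  define J where "J = {i<..<d}"
  have IH: "B j k \<in> Kf f \<and> (\<forall>s\<in>totatives f. norm (sigma f s (B j k)) \<le> (n + 1) ^ (d - 1 - j))"
    if "j \<in> J" for j
    using less.hyps[of j] that unfolding J_def n_def by auto
  define \<delta> where "\<delta> = (if i = k then 1 else 0 :: complex)"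
  have eq: "(\<Sum>j<d. A i j * B j k) = \<delta>" using AB less.prems k unfolding matmul_def \<delta>_def by auto
  have "(\<Sum>j<d. A i j * B j k) = A i i * B i k + (\<Sum>j\<in>{..<d}-{i}. A i j * B j k)"
    using less.prems by (subst sum.remove[of _ i]) auto
  also have "(\<Sum>j\<in>{..<d}-{i}. A i j * B j k) = (\<Sum>j\<in>J. A i j * B j k)"
  proof (rule sum.mono_neutral_right)
    show "J \<subseteq> {..<d} - {i}" unfolding J_def by auto
    show "\<forall>j\<in>{..<d} - {i} - J. A i j * B j k = 0" using Atri less.prems unfolding J_def by auto
  qed simp
  finally have split: "(\<Sum>j<d. A i j * B j k) = B i k + (\<Sum>j\<in>J. A i j * B j k)"
    using Adiag less.prems by simp
  have Bik: "B i k = \<delta> - (\<Sum>j\<in>J. A i j * B j k)" unfolding eq_diff_eq using eq split by simp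
  have \<delta>K: "\<delta> \<in> Kf f" unfolding \<delta>_def using K_0[OF f] K_1[OF f] by auto
  have JK: "\<And>j. j \<in> J \<Longrightarrow> A i j * B j k \<in> Kf f"
    using IH AK less.prems unfolding J_def by (intro K_mult[OF f]) auto
  have sK: "(\<Sum>j\<in>J. A i j * B j k) \<in> Kf f" using JK by (intro K_sum[OF f]) (auto simp: J_def)
  have BK: "B i k \<in> Kf f" unfolding Bik by (rule K_diff[OF f \<delta>K sK])
  have bound: "norm (sigma f s (B i k)) \<le> (n + 1) ^ (d - 1 - i)" if s: "s \<in> totatives f" for s
  proof -
    have sd: "sigma f s \<delta> = \<delta>" unfolding \<delta>_def using sigma_0[OF f s] sigma_1[OF f s] by simp
    have "sigma f s (B i k) = sigma f s \<delta> - sigma f s (\<Sum>j\<in>J. A i j * B j k)"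
      unfolding Bik by (rule sigma_diff[OF f s \<delta>K sK])
    also have "sigma f s (\<Sum>j\<in>J. A i j * B j k) = (\<Sum>j\<in>J. sigma f s (A i j * B j k))"
      by (rule sigma_sum[OF f s]) (auto simp: J_def JK)
    also have "\<dots> = (\<Sum>j\<in>J. sigma f s (A i j) * sigma f s (B j k))"
      using IH AK less.prems unfolding J_def by (intro sum.cong refl sigma_mult[OF f s]) auto
    finally have e: "sigma f s (B i k) = \<delta> - (\<Sum>j\<in>J. sigma f s (A i j) * sigma f s (B j k))" unfolding sd .
    have "norm (sigma f s (B i k)) \<le> norm \<delta> + norm (\<Sum>j\<in>J. sigma f s (A i j) * sigma f s (B j k))"
      unfolding e by (rule norm_triangle_ineq4)
    also have "norm \<delta> \<le> 1" unfolding \<delta>_def by simp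
    also have "norm (\<Sum>j\<in>J. sigma f s (A i j) * sigma f s (B j k)) \<le> (\<Sum>j\<in>J. norm (sigma f s (A i j) * sigma f s (B j k)))"
      by (rule norm_sum)
    also have "\<dots> \<le> (\<Sum>j\<in>J. n * (n + 1) ^ (d - 1 - j))"
    proof (rule sum_mono)
      fix j assume j: "j \<in> J"
      have "norm (sigma f s (A i j) * sigma f s (B j k)) = norm (sigma f s (A i j)) * norm (sigma f s (B j k))"
        by (rule norm_mult)
      also have "\<dots> \<le> n * (n + 1) ^ (d - 1 - j)"
        using Ab s less.prems j IH[OF j] unfolding J_def n_def by (intro mult_mono) auto
      finally show "norm (sigma f s (A i j) * sigma f s (B j k)) \<le> n * (n + 1) ^ (d - 1 - j)" .
    qed
    also have "(\<Sum>j\<in>J. n * (n + 1) ^ (d - 1 - j)) = (n + 1) ^ (d - 1 - i) - 1"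
      unfolding J_def by (rule geo[OF less.prems])
    finally show ?thesis by simp
  qed
  show ?case
  proof (rule conjI)
    show "B i k \<in> Kf f" by (rule BK)
    show "\<forall>s\<in>totatives f. norm (sigma f s (B i k)) \<le> (real (totient f) + 1) ^ (d - 1 - i)"
      by (intro ballI) (rule bound[unfolded n_def])
  qed
qed

lemma final_ineq: fixes n :: real assumes n: "n \<ge> 1"
  shows "real d * (n + 1) ^ d \<le> (2 * n) powr (2 * real d)"
proof -
  have "d < 2 ^ d" by (rule less_exp)
  then have "real d < real (2 ^ d)" by (simp only: of_nat_less_iff)
  then have a0: "real d \<le> 2 ^ d" by simp
  have a1: "(2::real) ^ d \<le> (2 * n) ^ d" using n by (intro power_mono) auto
  have a: "real d \<le> (2 * n) ^ d" using a0 a1 by (rule order_trans)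
  have b: "(n + 1) ^ d \<le> (2 * n) ^ d" using n by (intro power_mono) auto
  have p1: "0 \<le> (2 * n) ^ d" using n by simp
  have p2: "0 \<le> (n + 1) ^ d" using n by simp
  have "real d * (n + 1) ^ d \<le> (2 * n) ^ d * (2 * n) ^ d"
    by (rule mult_mono[OF a b p1 p2])
  also have "(2 * n) ^ d * (2 * n) ^ d = (2 * n) ^ (d + d)" by (rule power_add[symmetric])
  also have "d + d = 2 * d" by simp
  also have "(2 * n) ^ (2 * d) = (2 * n) powr (real (2 * d))"
    using n by (intro powr_realpow[symmetric]) simp
  also have "real (2 * d) = 2 * real d" by simp
  finally show ?thesis .
qed

theorem lemma13:
  shows "\<exists>C>0. \<forall>(f::nat) (d::nat) (A::nat \<Rightarrow> nat \<Rightarrow> complex).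
    f \<ge> 1 \<and> d \<ge> 1
    \<and> (\<forall>i<d. \<forall>j<d. j < i \<longrightarrow> A i j = 0)
    \<and> (\<forall>i<d. A i i = 1)
    \<and> (\<forall>i<d. \<forall>j<d. \<exists>c::nat \<Rightarrow> rat.
           (\<forall>l<totient f. \<bar>c l\<bar> \<le> 1) \<and> A i j = powbasis_comb f c)
    \<longrightarrow> opnorm f d A \<le> real d * real (totient f) powr (3/2)
      \<and> (\<forall>B. (\<forall>i<d. \<forall>k<d. matmul d A B i k = (if i = k then 1 else 0))
              \<and> (\<forall>i<d. \<forall>k<d. matmul d B A i k = (if i = k then 1 else 0))
           \<longrightarrow> opnorm f d B \<le> (2 * real (totient f)) powr (C * real d))"
proof (intro exI[of _ "2::real"] conjI allI impI)
  show "(2::real) > 0" by simp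
  fix f d :: nat and A :: "nat \<Rightarrow> nat \<Rightarrow> complex"
  assume H: "f \<ge> 1 \<and> d \<ge> 1
    \<and> (\<forall>i<d. \<forall>j<d. j < i \<longrightarrow> A i j = 0)
    \<and> (\<forall>i<d. A i i = 1)
    \<and> (\<forall>i<d. \<forall>j<d. \<exists>c::nat \<Rightarrow> rat.
           (\<forall>l<totient f. \<bar>c l\<bar> \<le> 1) \<and> A i j = powbasis_comb f c)"
  have f: "f > 0" and d: "d > 0" using H by auto
  have Atri: "\<forall>i<d. \<forall>j<d. j < i \<longrightarrow> A i j = 0" and Adiag: "\<forall>i<d. A i i = 1" using H by auto
  have Ac: "\<forall>i<d. \<forall>j<d. \<exists>c::nat \<Rightarrow> rat. (\<forall>l<totient f. \<bar>c l\<bar> \<le> 1) \<and> A i j = powbasis_comb f c"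
    using H by (elim conjE) assumption
  define n where "n = real (totient f)"
  have t1: "1 \<le> totient f" using totient_pos[OF f] by linarith
  then have "real 1 \<le> real (totient f)" by (simp only: of_nat_le_iff)
  then have n1: "n \<ge> 1" unfolding n_def by simp
  have AK: "\<forall>i<d. \<forall>j<d. A i j \<in> Kf f"
  proof (intro allI impI)
    fix i j assume i: "i < d" and j: "j < d"
    obtain c where "A i j = powbasis_comb f c" using Ac i j by blast
    then show "A i j \<in> Kf f" by (simp add: pbc_in_K[OF f])
  qed
  have Ab: "\<forall>s\<in>totatives f. \<forall>i<d. \<forall>j<d. norm (sigma f s (A i j)) \<le> n"
  proof (intro ballI allI impI)
    fix s i j assume s: "s \<in> totatives f" and i: "i < d" and j: "j < d"
    obtain c where c: "\<forall>l<totient f. \<bar>c l\<bar> \<le> 1" and Aij: "A i j = powbasis_comb f c" using Ac i j by blast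
    show "norm (sigma f s (A i j)) \<le> n" unfolding Aij n_def by (rule norm_sigma_pbc[OF f s c])
  qed
  have "opnorm f d A \<le> real d * n" by (rule opnorm_le[OF f d AK _ Ab]) (use n1 in simp)
  also have "real d * n \<le> real d * n powr (3/2)"
  proof (rule mult_left_mono)
    have "n = n powr 1" using n1 by simp
    also have "\<dots> \<le> n powr (3/2)" using n1 by (intro powr_mono) auto
    finally show "n \<le> n powr (3/2)" .
  qed simp
  finally show "opnorm f d A \<le> real d * real (totient f) powr (3/2)" unfolding n_def .
  fix B :: "nat \<Rightarrow> nat \<Rightarrow> complex"
  assume HB: "(\<forall>i<d. \<forall>k<d. matmul d A B i k = (if i = k then 1 else 0))
              \<and> (\<forall>i<d. \<forall>k<d. matmul d B A i k = (if i = k then 1 else 0))"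
  then have AB: "\<forall>i<d. \<forall>k<d. matmul d A B i k = (if i = k then 1 else 0)" by (rule conjunct1)
  have Ab': "\<forall>s\<in>totatives f. \<forall>i<d. \<forall>j<d. norm (sigma f s (A i j)) \<le> real (totient f)"
    using Ab unfolding n_def .
  have BK: "\<forall>i<d. \<forall>k<d. B i k \<in> Kf f"
  proof (intro allI impI)
    fix i k assume i: "i < d" and k: "k < d"
    show "B i k \<in> Kf f" using backsub[OF f k Atri Adiag AK Ab' AB i] by (rule conjunct1)
  qed
  have Bb: "\<forall>s\<in>totatives f. \<forall>i<d. \<forall>k<d. norm (sigma f s (B i k)) \<le> (n + 1) ^ d"
  proof (intro ballI allI impI)
    fix s i k assume s: "s \<in> totatives f" and i: "i < d" and k: "k < d"
    have "\<forall>s\<in>totatives f. norm (sigma f s (B i k)) \<le> (real (totient f) + 1) ^ (d - 1 - i)"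
      using backsub[OF f k Atri Adiag AK Ab' AB i] by (rule conjunct2)
    then have "norm (sigma f s (B i k)) \<le> (n + 1) ^ (d - 1 - i)" using s unfolding n_def by (rule bspec)
    also have "\<dots> \<le> (n + 1) ^ d" using n1 by (intro power_increasing) auto
    finally show "norm (sigma f s (B i k)) \<le> (n + 1) ^ d" .
  qed
  have "opnorm f d B \<le> real d * (n + 1) ^ d" by (rule opnorm_le[OF f d BK _ Bb]) (use n1 in simp)
  also have "\<dots> \<le> (2 * n) powr (2 * real d)" by (rule final_ineq[OF n1])
  finally show "opnorm f d B \<le> (2 * real (totient f)) powr (2 * real d)" unfolding n_def .
qed

end
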